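(* Let $a,b\in GF(q)\setminus\{0\}$, $a\ne b$, with $b/a$ a square in $GF(q)$, and let $\mathcal B^1_{(s_1,c_1)},\mathcal B^1_{(s_2,c_2)}\in\tau(a,b)$. Then these two circles are tangential to $\mathcal B_a$ in the same point $P$ or in the opposite points $P$ and $-P$, respectively, if and only if $s_1\bar s_2\in GF(q)\setminus\{0\}$. In that case $P$ satisfies $$\frac{P^2}{a}=\frac{s_1}{\bar s_1}=\frac{s_2}{\bar s_2}.$$
   Context: Let $p$ be an odd prime, $m\ge1$, and $q=p^m$. $GF(q^2)$ denotes the quadratic extension of $GF(q)$, and for $z\in GF(q^2)$ we write $\bar z:=z^{q}$. The Miquelian Möbius plane $\mathbb M(q)$ has point set $GF(q^2)\cup\{\infty\}$ and circles of two types: for $s\in GF(q^2)$ and $c\in GF(q)\setminus\{0\}$, the circle of the first type $\mathcal B^1_{(s,c)}=\{z\in GF(q^2):(z-s)(\bar z-\bar s)=c\}$; for $s\in GF(q^2)\setminus\{0\}$ and $c\in GF(q)$, the circle of the second type $\mathcal B^2_{(s,c)}=\{z\in GF(q^2):\bar s z+s\bar z=c\}\cup\{\infty\}$. Two circles are called tangential if they have exactly one point in common. For $a\in GF(q)\setminus\{0\}$ put $\mathcal B_a:=\mathcal B^1_{(0,a)}$, and for $a,b\in GF(q)\setminus\{0\}$ let $\tau(a,b)$ be the set of circles tangential to both $\mathcal B_a$ and $\mathcal B_b$. Note that $P\in\mathcal B_a$ implies $-P\in\mathcal B_a$; $-P$ is called the opposite point of $P$. *)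

theory Defs
  imports "HOL-Computational_Algebra.Primes"
begin

text \<open>The field GF(q^2) is modelled as a finite field type 'a with CARD('a) = q^2;
  GF(q) is its unique subfield of order q, i.e. the fixed points of z \<mapsto> z^q.
  Points of the Moebius plane are 'a option, with None playing the role of infinity.\<close>

definition conjq :: "nat \<Rightarrow> 'a::{field,finite} \<Rightarrow> 'a" where
  "conjq q z = z ^ q"

definition GFq :: "nat \<Rightarrow> 'a::{field,finite} set" where
  "GFq q = {z. z ^ q = z}"

definition circ1 :: "nat \<Rightarrow> 'a::{field,finite} \<Rightarrow> 'a \<Rightarrow> 'a option set" where
  "circ1 q s c = Some ` {z. (z - s) * (conjq q z - conjq q s) = c}"

definition circ2 :: "nat \<Rightarrow> 'a::{field,finite} \<Rightarrow> 'a \<Rightarrow> 'a option set" where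
  "circ2 q s c = insert None (Some ` {z. conjq q s * z + s * conjq q z = c})"

definition circles :: "nat \<Rightarrow> ('a::{field,finite}) option set set" where
  "circles q = {circ1 q s c | s c. c \<in> GFq q \<and> c \<noteq> 0}
             \<union> {circ2 q s c | s c. s \<noteq> 0 \<and> c \<in> GFq q}"

definition tangential :: "'a option set \<Rightarrow> 'a option set \<Rightarrow> bool" where
  "tangential A B \<longleftrightarrow> card (A \<inter> B) = 1"

definition Bcirc :: "nat \<Rightarrow> 'a::{field,finite} \<Rightarrow> 'a option set" where
  "Bcirc q a = circ1 q 0 a"

definition tau :: "nat \<Rightarrow> 'a::{field,finite} \<Rightarrow> 'a \<Rightarrow> ('a option) set set" where
  "tau q a b = {C \<in> circles q. tangential C (Bcirc q a) \<and> tangential C (Bcirc q b)}"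

end

theory Submission
  imports Defs
begin

lemma fermat_fin:
  fixes x :: "'a::{field,finite}"
  shows "x ^ card (UNIV::'a set) = x"
proof (cases "x = 0")
  case True
  then show ?thesis using card_gt_0_iff[of "UNIV::'a set"] by simp
next
  case False
  define A where "A = (UNIV :: 'a set) - {0}"
  have fin: "finite A" by simp
  have bij: "bij_betw (\<lambda>y. x * y) A A"
    unfolding bij_betw_def inj_on_def A_def
  proof (intro conjI ballI impI)
    show "(*) x ` (UNIV - {0}) = UNIV - {0}"
    proof
      show "(*) x ` (UNIV - {0}) \<subseteq> UNIV - {0}" using False by auto
      show "UNIV - {0} \<subseteq> (*) x ` (UNIV - {0})"
      proof
        fix y :: 'a assume "y \<in> UNIV - {0}"
        then have "y = x * (y / x)" "y / x \<in> UNIV - {0}" using False by auto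
        then show "y \<in> (*) x ` (UNIV - {0})" by blast
      qed
    qed
  qed (use False in auto)
  have "prod (\<lambda>y. x * y) A = prod id A"
    using prod.reindex_bij_betw[OF bij, of id] by simp
  moreover have "prod (\<lambda>y. x * y) A = x ^ card A * prod id A"
    by (simp add: prod.distrib)
  moreover have "prod id A \<noteq> 0" using fin by (simp add: A_def)
  ultimately have "x ^ card A = 1" by simp
  moreover have "card A = card (UNIV::'a set) - 1" unfolding A_def by (simp add: card_Diff_singleton)
  moreover have "card (UNIV::'a set) > 0" using card_gt_0_iff[of "UNIV::'a set"] by simp
  ultimately show ?thesis
    by (metis One_nat_def Suc_pred mult.right_neutral power_Suc)
qed

lemma two_ne_zero_fin:
  assumes "odd (card (UNIV::'a::{field,finite} set))"
  shows "(2::'a) \<noteq> 0"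
proof
  assume h: "(2::'a) = 0"
  have "(\<Sum>x\<in>(UNIV::'a set). x + 1) = (\<Sum>x\<in>UNIV. x)"
  proof -
    have "bij_betw (\<lambda>x::'a. x + 1) UNIV UNIV"
      by (rule bij_betw_byWitness[where f'="\<lambda>x. x - 1"]) auto
    from sum.reindex_bij_betw[OF this, of "\<lambda>x. x"] show ?thesis by simp
  qed
  then have "of_nat (card (UNIV::'a set)) = (0::'a)"
    by (simp add: sum.distrib)
  moreover obtain k where "card (UNIV::'a set) = 2 * k + 1" using assms oddE by blast
  ultimately have "(2::'a) * of_nat k + 1 = 0" by (simp add: add.commute)
  with h show False by simp
qed

lemma mem_circ1: "Some z \<in> circ1 q s c \<longleftrightarrow> (z - s) * (conjq q z - conjq q s) = c"
  by (auto simp: circ1_def)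

lemma tang_lemma:
  fixes s c a P :: "'a::{field,finite}"
  assumes q: "q > 0" "odd q" and cardq: "card (UNIV::'a set) = q ^ 2"
    and a: "a \<noteq> 0"
    and t: "card (circ1 q s c \<inter> Bcirc q a) = 1"
    and P: "Some P \<in> circ1 q s c \<inter> Bcirc q a"
  shows "s \<noteq> 0 \<and> s * conjq q P = conjq q s * P"
proof -
  have cc: "\<And>z::'a. conjq q (conjq q z) = z"
    unfolding conjq_def using fermat_fin cardq
    by (metis power2_eq_square power_mult)
  have c0: "conjq q (0::'a) = 0" using q by (simp add: conjq_def)
  have cmul: "\<And>x y::'a. conjq q (x * y) = conjq q x * conjq q y"
    by (simp add: conjq_def power_mult_distrib)
  have cdiv: "\<And>x y::'a. conjq q (x / y) = conjq q x / conjq q y"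
    by (simp add: conjq_def power_divide)
  have cneg: "\<And>x::'a. conjq q (- x) = - conjq q x"
    using q(2) by (simp add: conjq_def power_minus_odd)
  have cnz: "\<And>x::'a. conjq q x = 0 \<longleftrightarrow> x = 0"
    using q by (simp add: conjq_def)
  obtain X where X: "circ1 q s c \<inter> Bcirc q a = {X}" using t card_1_singletonE by blast
  have P1: "(P - s) * (conjq q P - conjq q s) = c" and P2: "P * conjq q P = a"
    using P c0 by (auto simp: mem_circ1 Bcirc_def)
  have uniq: "\<And>Q. (Q - s) * (conjq q Q - conjq q s) = c \<Longrightarrow> Q * conjq q Q = a \<Longrightarrow> Q = P"
  proof -
    fix Q assume "(Q - s) * (conjq q Q - conjq q s) = c" "Q * conjq q Q = a"
    then have "Some Q \<in> circ1 q s c \<inter> Bcirc q a" using c0 by (auto simp: mem_circ1 Bcirc_def)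
    then show "Q = P" using X P by auto
  qed
  have s0: "s \<noteq> 0"
  proof
    assume s: "s = 0"
    have "- P = P"
      by (rule uniq) (use P1 P2 s c0 cneg in auto)
    then have "2 * P = 0" by (simp add: algebra_simps)
    moreover have "(2::'a) \<noteq> 0" using cardq q(2) by (intro two_ne_zero_fin) simp
    ultimately have "P = 0" by simp
    with P2 a c0 show False by simp
  qed
  define u where "u = conjq q P"
  define v where "v = conjq q s"
  have v0: "v \<noteq> 0" using s0 cnz v_def by simp
  define Q where "Q = s * u / v"
  have cQ: "conjq q Q = v * P / s"
    unfolding Q_def u_def v_def by (simp add: cdiv cmul cc)
  have P1': "(P - s) * (u - v) = c" and P2': "P * u = a" using P1 P2 u_def v_def by auto
  have "Q = P"
  proof (rule uniq)
    have "(Q - s) * (v * P / s - v) = (P - s) * (u - v)"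
      unfolding Q_def using s0 v0 by (simp add: field_simps)
    then show "(Q - s) * (conjq q Q - conjq q s) = c" using cQ P1' v_def by simp
    have "Q * (v * P / s) = P * u" unfolding Q_def using s0 v0 by (simp add: field_simps)
    then show "Q * conjq q Q = a" using cQ P2' by simp
  qed
  then have "s * u = v * P" unfolding Q_def using v0 by (simp add: field_simps)
  then show ?thesis using s0 u_def v_def by simp
qed


theorem mainTheorem3:
  fixes p m q :: nat and a b s1 c1 s2 c2 :: "'a::{field,finite}"
  assumes "prime p" and "odd p" and "m \<ge> 1" and "q = p ^ m"
    and "card (UNIV :: 'a set) = q ^ 2"
    and "a \<in> GFq q - {0}" and "b \<in> GFq q - {0}" and "a \<noteq> b"
    and "\<exists>x \<in> GFq q. x ^ 2 = b / a"
    and "c1 \<in> GFq q - {0}" and "c2 \<in> GFq q - {0}"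
    and "circ1 q s1 c1 \<in> tau q a b" and "circ1 q s2 c2 \<in> tau q a b"
  shows "\<forall>P1 P2. Some P1 \<in> circ1 q s1 c1 \<inter> Bcirc q a \<longrightarrow> Some P2 \<in> circ1 q s2 c2 \<inter> Bcirc q a \<longrightarrow>
           (((P1 = P2 \<or> P2 = - P1) \<longleftrightarrow> s1 * conjq q s2 \<in> GFq q - {0})
            \<and> ((P1 = P2 \<or> P2 = - P1) \<longrightarrow>
                 P1 ^ 2 / a = s1 / conjq q s1 \<and> s1 / conjq q s1 = s2 / conjq q s2))"
proof (intro allI impI)
  fix P1 P2 assume H1: "Some P1 \<in> circ1 q s1 c1 \<inter> Bcirc q a"
    and H2: "Some P2 \<in> circ1 q s2 c2 \<inter> Bcirc q a"
  have p0: "p > 0" using assms(1) prime_gt_0_nat by blast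
  have q0: "q > 0" using assms(4) p0 by simp
  have qo: "odd q" using assms(2,4) by simp
  have a0: "a \<noteq> 0" using assms(6) by simp
  have t1: "card (circ1 q s1 c1 \<inter> Bcirc q a) = 1"
    using assms(12) by (auto simp: tau_def tangential_def)
  have t2: "card (circ1 q s2 c2 \<inter> Bcirc q a) = 1"
    using assms(13) by (auto simp: tau_def tangential_def)
  have c0: "conjq q (0::'a) = 0" using q0 by (simp add: conjq_def)
  have cc: "\<And>z::'a. conjq q (conjq q z) = z"
    unfolding conjq_def using fermat_fin assms(5)
    by (metis power2_eq_square power_mult)
  have cmul: "\<And>x y::'a. conjq q (x * y) = conjq q x * conjq q y"
    by (simp add: conjq_def power_mult_distrib)
  have cnz: "\<And>x::'a. conjq q x = 0 \<longleftrightarrow> x = 0"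
    using q0 by (simp add: conjq_def)
  from tang_lemma[OF q0 qo assms(5) a0 t1 H1] have s1: "s1 \<noteq> 0" and e1: "s1 * conjq q P1 = conjq q s1 * P1" by auto
  from tang_lemma[OF q0 qo assms(5) a0 t2 H2] have s2: "s2 \<noteq> 0" and e2: "s2 * conjq q P2 = conjq q s2 * P2" by auto
  have n1: "P1 * conjq q P1 = a" and n2: "P2 * conjq q P2 = a"
    using H1 H2 c0 by (auto simp: mem_circ1 Bcirc_def)
  define u1 where "u1 = conjq q P1"
  define u2 where "u2 = conjq q P2"
  define v1 where "v1 = conjq q s1"
  define v2 where "v2 = conjq q s2"
  have v10: "v1 \<noteq> 0" and v20: "v2 \<noteq> 0" using s1 s2 cnz v1_def v2_def by auto
  have P10: "P1 \<noteq> 0" and P20: "P2 \<noteq> 0" using n1 n2 a0 by auto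
  have u10: "u1 \<noteq> 0" and u20: "u2 \<noteq> 0" using P10 P20 cnz u1_def u2_def by auto
  have e1': "s1 * u1 = v1 * P1" and e2': "s2 * u2 = v2 * P2" using e1 e2 u1_def u2_def v1_def v2_def by auto
  have n1': "P1 * u1 = a" and n2': "P2 * u2 = a" using n1 n2 u1_def u2_def by auto
  have G: "s1 * conjq q s2 \<in> GFq q - {0} \<longleftrightarrow> s1 * v2 = v1 * s2"
    using s1 v20 cmul cc v1_def v2_def by (auto simp: GFq_def conjq_def[symmetric] mult.commute)
  have K1: "s1 / v1 = P1 / u1" using e1' v10 u10 by (simp add: field_simps)
  have K2: "s2 / v2 = P2 / u2" using e2' v20 u20 by (simp add: field_simps)
  have "s1 * v2 = v1 * s2 \<longleftrightarrow> P1 / u1 = P2 / u2"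
  proof -
    have "s1 * v2 = v1 * s2 \<longleftrightarrow> s1 / v1 = s2 / v2" using v10 v20 by (simp add: frac_eq_eq mult.commute)
    then show ?thesis using K1 K2 by simp
  qed
  also have "\<dots> \<longleftrightarrow> P1 * u2 = P2 * u1" using u10 u20 by (simp add: field_simps)
  also have "\<dots> \<longleftrightarrow> P1 ^ 2 = P2 ^ 2"
  proof
    assume h: "P1 * u2 = P2 * u1"
    have "P1 ^ 2 * u2 = P2 * (P1 * u1)" using h by (simp add: power2_eq_square algebra_simps)
    also have "\<dots> = P2 ^ 2 * u2" using n1' n2' by (simp add: power2_eq_square algebra_simps)
    finally show "P1 ^ 2 = P2 ^ 2" using u20 by simp
  next
    assume h: "P1 ^ 2 = P2 ^ 2"
    have "P1 * (P1 * u2) = P1 * (P2 * u1)"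
    proof -
      have "P1 * (P1 * u2) = P2 * (P2 * u2)" using h by (simp add: power2_eq_square algebra_simps)
      also have "\<dots> = P2 * (P1 * u1)" using n1' n2' by simp
      finally show ?thesis by (simp add: algebra_simps)
    qed
    then show "P1 * u2 = P2 * u1" using P10 by simp
  qed
  also have "\<dots> \<longleftrightarrow> (P1 = P2 \<or> P2 = - P1)"
    by (metis power2_eq_iff)
  finally have I: "(P1 = P2 \<or> P2 = - P1) \<longleftrightarrow> s1 * v2 = v1 * s2" by blast
  have R: "P1 ^ 2 / a = s1 / conjq q s1"
  proof -
    have "P1 ^ 2 / a = P1 / u1" using n1'[symmetric] P10 u10 by (simp add: power2_eq_square)
    then show ?thesis using K1 v1_def by simp
  qed
  show "((P1 = P2 \<or> P2 = - P1) \<longleftrightarrow> s1 * conjq q s2 \<in> GFq q - {0})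
            \<and> ((P1 = P2 \<or> P2 = - P1) \<longrightarrow>
                 P1 ^ 2 / a = s1 / conjq q s1 \<and> s1 / conjq q s1 = s2 / conjq q s2)"
    using I G R v10 v20 v1_def v2_def by (auto simp: field_simps)
qed

end
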